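(* Let $0<\kappa<1$ and $\lambda=\sqrt{1-\kappa^2}$. For $\phi$ near $0$ define $$u(\phi)=\int_0^{\phi} F\!\left(\tfrac14,\tfrac34;\tfrac12;\kappa^2\sin^2\theta\right)\,\mathrm{d}\theta ,$$ let $u\mapsto\phi(u)$ be the local inverse near $0$ with $\phi(0)=0$, let $\psi=\psi(u)$ be defined near $u=0$ with $\psi(0)=0$ and $\sin\psi=\kappa\sin\phi$, and set $d=\cos\psi$. Then $d$ satisfies the differential equation $$(d')^2=2\,(1-d)\,(d^2-\lambda^2),$$ where $'$ denotes differentiation with respect to $u$.
   Context: $F(a,b;c;z)$ denotes the Gauss hypergeometric function ${}_2F_1(a,b;c;z)$. *)

theory Defs
  imports "HOL-Analysis.Analysis"
begin

definition hyp2F1 :: "real \<Rightarrow> real \<Rightarrow> real \<Rightarrow> real \<Rightarrow> real" where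
  "hyp2F1 a b c z =
     (\<Sum>n. pochhammer a n * pochhammer b n / (pochhammer c n * fact n) * z ^ n)"

definition uF :: "real \<Rightarrow> real \<Rightarrow> real" where
  "uF \<kappa> \<phi> = (LBINT \<theta>=0..\<phi>. hyp2F1 (1/4) (3/4) (1/2) (\<kappa>\<^sup>2 * (sin \<theta>)\<^sup>2))"

end

theory Submission
  imports Defs
begin

definition G :: "real \<Rightarrow> real" where
  "G t = (1 / sqrt (1 + t) + 1 / sqrt (1 - t)) / 2"

lemma coeff_id:
  "pochhammer (1/4::real) m * pochhammer (3/4) m / (pochhammer (1/2) m * fact m) * (t\<^sup>2) ^ m
   = ((-1/2::real) gchoose (2*m)) * t ^ (2*m)"
proof -
  have p: "pochhammer (1/2::real) (2*m) = 4^m * pochhammer (1/4) m * pochhammer (3/4) m"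
    using pochhammer_double[of "1/4::real" m] by (simp add: power_mult)
  have f: "fact (2*m) = (4^m * pochhammer (1/2) m * fact m :: real)"
    using fact_double[of m] by (simp add: power_mult)
  have g: "((-1/2::real) gchoose (2*m)) = pochhammer (1/2) (2*m) / fact (2*m)"
    by (simp add: gbinomial_pochhammer)
  have pos: "pochhammer (1/2::real) m > 0" by (simp add: pochhammer_pos)
  show ?thesis unfolding g p f using pos
    by (simp add: power_mult power2_eq_square field_simps)
qed

lemma hyp_closed:
  assumes "\<bar>t\<bar> < 1"
  shows "hyp2F1 (1/4) (3/4) (1/2) (t\<^sup>2) = G t"
proof -
  have a: "(\<lambda>n. ((-1/2) gchoose n) * t^n) sums (1 + t) powr (-1/2)"
    using gen_binomial_real assms by blast
  have b: "(\<lambda>n. ((-1/2) gchoose n) * (-t)^n) sums (1 + (-t)) powr (-1/2)"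
    using gen_binomial_real assms by (metis abs_minus_cancel)
  have pw: "x powr - (1/2) = 1 / sqrt x" if "x > 0" for x :: real
    using that by (simp add: powr_minus_divide powr_half_sqrt)
  have pw1: "(1 + t) powr - (1/2) = 1 / sqrt (1+t)" "(1 - t) powr - (1/2) = 1 / sqrt (1-t)"
    using assms by (auto intro!: pw)
  have c: "(\<lambda>n. (((-1/2) gchoose n) * t^n + ((-1/2) gchoose n) * (-t)^n) / 2) sums G t"
    using sums_divide[OF sums_add[OF a b], of 2] assms
    by (simp add: G_def pw1)
  let ?f = "\<lambda>n. (((-1/2::real) gchoose n) * t^n + ((-1/2) gchoose n) * (-t)^n) / 2"
  have z: "?f n = 0" if "n \<notin> range (\<lambda>m. 2*m)" for n
  proof -
    have "odd n" using that by (metis evenE rangeI)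
    then show ?thesis by simp
  qed
  have "(\<lambda>m. ?f (2*m)) sums G t"
    using sums_mono_reindex[of "\<lambda>m. 2*m" ?f, OF _ z] c
    by (simp add: strict_mono_def)
  moreover have "?f (2*m) = pochhammer (1/4::real) m * pochhammer (3/4) m / (pochhammer (1/2) m * fact m) * (t\<^sup>2) ^ m" for m
    unfolding coeff_id by simp
  ultimately show ?thesis unfolding hyp2F1_def by (simp add: sums_iff)
qed


lemma ksin_bound:
  fixes \<kappa> x :: real
  assumes "0 < \<kappa>" "\<kappa> < 1"
  shows "\<bar>\<kappa> * sin x\<bar> < 1"
proof -
  have "\<bar>\<kappa> * sin x\<bar> = \<kappa> * \<bar>sin x\<bar>" unfolding abs_mult using assms by simp
  also have "\<dots> \<le> \<kappa>" using assms abs_sin_le_one[of x] by (simp add: mult_left_le)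
  finally show ?thesis using assms by linarith
qed

lemma uF_eq:
  assumes "0 < \<kappa>" "\<kappa> < 1"
  shows "uF \<kappa> = (\<lambda>p. LBINT \<theta>=0..p. G (\<kappa> * sin \<theta>))"
proof -
  have "(\<lambda>\<theta>. hyp2F1 (1/4) (3/4) (1/2) (\<kappa>\<^sup>2 * (sin \<theta>)\<^sup>2)) = (\<lambda>\<theta>. G (\<kappa> * sin \<theta>))"
  proof
    fix \<theta>
    have "\<kappa>\<^sup>2 * (sin \<theta>)\<^sup>2 = (\<kappa> * sin \<theta>)\<^sup>2" by (simp add: power_mult_distrib)
    then show "hyp2F1 (1/4) (3/4) (1/2) (\<kappa>\<^sup>2 * (sin \<theta>)\<^sup>2) = G (\<kappa> * sin \<theta>)"
      using hyp_closed[OF ksin_bound[OF assms]] by simp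
  qed
  then show ?thesis unfolding uF_def[abs_def] by simp
qed

lemma G_cont:
  assumes "0 < \<kappa>" "\<kappa> < 1"
  shows "continuous_on UNIV (\<lambda>\<theta>. G (\<kappa> * sin \<theta>))"
proof -
  have "1 + \<kappa> * sin x > 0" "1 - \<kappa> * sin x > 0" for x
    using ksin_bound[OF assms, of x] by linarith+
  then have "sqrt (1 + \<kappa> * sin x) \<noteq> 0" "sqrt (1 - \<kappa> * sin x) \<noteq> 0" for x
    by (metis less_irrefl real_sqrt_eq_zero_cancel_iff)+
  then show ?thesis unfolding G_def
    by (intro continuous_intros) auto
qed

lemma uF_deriv:
  assumes "0 < \<kappa>" "\<kappa> < 1"
  shows "(uF \<kappa> has_real_derivative G (\<kappa> * sin x)) (at x)"
proof -
  define a where "a = min 0 x - 1"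
  define b where "b = max 0 x + 1"
  have "((\<lambda>p. LBINT \<theta>=ereal 0..p. G (\<kappa> * sin \<theta>)) has_vector_derivative G (\<kappa> * sin x)) (at x within {a..b})"
    by (rule interval_integral_FTC2) (auto simp: a_def b_def intro: continuous_on_subset[OF G_cont[OF assms]])
  then have "((\<lambda>p. LBINT \<theta>=0..p. G (\<kappa> * sin \<theta>)) has_vector_derivative G (\<kappa> * sin x)) (at x within {a..b})"
    by (simp add: zero_ereal_def)
  then have "((\<lambda>p. LBINT \<theta>=0..p. G (\<kappa> * sin \<theta>)) has_vector_derivative G (\<kappa> * sin x)) (at x within {a<..<b})"
    by (rule has_vector_derivative_within_subset) auto
  then have "((\<lambda>p. LBINT \<theta>=0..p. G (\<kappa> * sin \<theta>)) has_vector_derivative G (\<kappa> * sin x)) (at x)"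
    by (subst (asm) has_vector_derivative_within_open) (auto simp: a_def b_def)
  then show ?thesis unfolding uF_eq[OF assms] has_real_derivative_iff_has_vector_derivative .
qed

lemma G_pos:
  assumes "\<bar>t\<bar> < 1" shows "G t > 0"
  using assms unfolding G_def by (auto intro!: add_pos_pos)

lemma alg:
  fixes \<kappa> p Gv :: real
  assumes "0 < \<kappa>" "\<kappa> < 1"
    and s: "s = \<kappa> * sin p" and d: "d = sqrt (1 - s\<^sup>2)" and Gv: "Gv = G s"
  shows "(- (\<kappa> * (\<kappa> * (2 * sin p * cos p * (1 / Gv)))) / (2 * d))\<^sup>2
         = 2 * (1 - d) * (d\<^sup>2 - (sqrt (1 - \<kappa>\<^sup>2))\<^sup>2)"
proof -
  have sb: "\<bar>s\<bar> < 1" using ksin_bound[OF assms(1,2)] s by simp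
  have s2: "s\<^sup>2 < 1" using sb by (simp add: abs_square_less_1)
  have dpos: "d > 0" using s2 d by simp
  have dd: "d\<^sup>2 = 1 - s\<^sup>2" using s2 d by simp
  have l2: "(sqrt (1 - \<kappa>\<^sup>2))\<^sup>2 = 1 - \<kappa>\<^sup>2" using assms by (simp add: power_le_one)
  have p1: "1 + s > 0" "1 - s > 0" using sb by linarith+
  have sq: "sqrt (1+s) * sqrt (1-s) = d" using d by (simp add: real_sqrt_mult[symmetric] power2_eq_square algebra_simps)
  define A where "A = sqrt (1+s)"
  define B where "B = sqrt (1-s)"
  have Ap: "A > 0" "B > 0" using p1 by (auto simp: A_def B_def)
  have A2: "A\<^sup>2 = 1+s" "B\<^sup>2 = 1-s" using p1 by (auto simp: A_def B_def)
  have AB: "A * B = d" using sq by (simp add: A_def B_def)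
  have "G s = (A + B) / (2 * (A * B))"
    unfolding G_def A_def[symmetric] B_def[symmetric] using Ap by (simp add: field_simps)
  then have "(G s)\<^sup>2 = (A\<^sup>2 + B\<^sup>2 + 2 * (A * B)) / (4 * (A * B)\<^sup>2)"
    by (simp add: power2_eq_square field_simps)
  also have "\<dots> = (1 + d) / (2 * d\<^sup>2)"
    unfolding A2 AB using dpos by (simp add: field_simps)
  finally have G2: "(G s)\<^sup>2 = (1 + d) / (2 * d\<^sup>2)" .
  have Gpos: "Gv > 0" using G_pos[OF sb] Gv by simp
  have kc: "\<kappa>\<^sup>2 * (cos p)\<^sup>2 = d\<^sup>2 - (1 - \<kappa>\<^sup>2)"
  proof -
    have "\<kappa>\<^sup>2 * (cos p)\<^sup>2 = \<kappa>\<^sup>2 - s\<^sup>2"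
      unfolding s cos_squared_eq by (simp add: power_mult_distrib algebra_simps)
    then show ?thesis using dd by simp
  qed
  have "(- (\<kappa> * (\<kappa> * (2 * sin p * cos p * (1 / Gv)))) / (2 * d))\<^sup>2
        = s\<^sup>2 * (\<kappa>\<^sup>2 * (cos p)\<^sup>2) / (d\<^sup>2 * Gv\<^sup>2)"
    using Gpos dpos s by (simp add: field_simps power2_eq_square)
  also have "\<dots> = s\<^sup>2 * (d\<^sup>2 - (1 - \<kappa>\<^sup>2)) * 2 / (1 + d)"
  proof -
    have "d\<^sup>2 * Gv\<^sup>2 = (1 + d) / 2" unfolding Gv G2 using dpos by (simp add: field_simps)
    then show ?thesis unfolding kc by (simp only:) simp
  qed
  also have "\<dots> = 2 * (1 - d) * (d\<^sup>2 - (1 - \<kappa>\<^sup>2))"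
  proof -
    have e: "s\<^sup>2 = (1 - d) * (1 + d)" using dd by (simp add: algebra_simps power2_eq_square)
    have ne: "1 + d \<noteq> 0" using dpos by simp
    have "s\<^sup>2 * (d\<^sup>2 - (1 - \<kappa>\<^sup>2)) * 2 = (2 * (1 - d) * (d\<^sup>2 - (1 - \<kappa>\<^sup>2))) * (1 + d)"
      unfolding e by (simp only: mult_ac)
    then show ?thesis using ne by (metis nonzero_mult_div_cancel_right)
  qed
  finally show ?thesis unfolding l2 .
qed


theorem theorem3:
  fixes \<kappa> lam e :: real and \<phi> \<psi> :: "real \<Rightarrow> real"
  assumes "0 < \<kappa>" and "\<kappa> < 1"
    and "lam = sqrt (1 - \<kappa>\<^sup>2)"
    and "0 < e"
    and "continuous_on (ball 0 e) \<phi>" and "\<phi> 0 = 0"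
    and "\<And>u. u \<in> ball 0 e \<Longrightarrow> uF \<kappa> (\<phi> u) = u"
    and "continuous_on (ball 0 e) \<psi>" and "\<psi> 0 = 0"
    and "\<And>u. u \<in> ball 0 e \<Longrightarrow> sin (\<psi> u) = \<kappa> * sin (\<phi> u)"
  shows "\<exists>e'>0. \<forall>u. \<bar>u\<bar> < e' \<longrightarrow>
           (\<exists>D. ((\<lambda>v. cos (\<psi> v)) has_real_derivative D) (at u) \<and>
                D\<^sup>2 = 2 * (1 - cos (\<psi> u)) * ((cos (\<psi> u))\<^sup>2 - lam\<^sup>2))"
proof -
  note k = assms(1,2)
  have "\<exists>\<delta>>0. \<forall>x'\<in>ball 0 e. dist x' 0 < \<delta> \<longrightarrow> dist (\<psi> x') (\<psi> 0) < pi/2"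
  proof -
    have "0 \<in> ball (0::real) e" using assms(4) by simp
    then have "\<forall>\<epsilon>>0. \<exists>\<delta>>0. \<forall>x'\<in>ball 0 e. dist x' 0 < \<delta> \<longrightarrow> dist (\<psi> x') (\<psi> 0) < \<epsilon>"
      using assms(8) unfolding continuous_on_iff by blast
    moreover have "pi / 2 > (0::real)" by simp
    ultimately show ?thesis by blast
  qed
  then obtain \<delta> where \<delta>: "\<delta> > 0" "\<And>x'. x' \<in> ball 0 e \<Longrightarrow> dist x' 0 < \<delta> \<Longrightarrow> dist (\<psi> x') (\<psi> 0) < pi/2"
    by blast
  define e' where "e' = min e \<delta>"
  have e'pos: "e' > 0" using \<delta> assms(4) by (simp add: e'_def)
  have psi_small: "\<bar>\<psi> v\<bar> < pi/2" if "\<bar>v\<bar> < e'" for v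
    using \<delta>(2)[of v] that assms(9) by (simp add: e'_def dist_real_def)
  have cos_eq: "cos (\<psi> v) = sqrt (1 - (\<kappa> * sin (\<phi> v))\<^sup>2)" if "\<bar>v\<bar> < e'" for v
  proof -
    have "cos (\<psi> v) > 0" using psi_small[OF that] by (intro cos_gt_zero_pi) auto
    moreover have "(cos (\<psi> v))\<^sup>2 = 1 - (\<kappa> * sin (\<phi> v))\<^sup>2"
      using assms(10)[of v] that by (simp add: cos_squared_eq e'_def)
    ultimately show ?thesis by (metis abs_of_pos real_sqrt_abs)
  qed
  show ?thesis
  proof (rule exI[of _ e'], intro conjI allI impI e'pos)
    fix u :: real
    assume u: "\<bar>u\<bar> < e'"
    then have ue: "-e < u" "u < e" by (auto simp: e'_def)
    define Gu where "Gu = G (\<kappa> * sin (\<phi> u))"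
    define d where "d = sqrt (1 - (\<kappa> * sin (\<phi> u))\<^sup>2)"
    have Gpos: "Gu > 0" unfolding Gu_def by (rule G_pos[OF ksin_bound[OF k]])
    have cphi: "isCont \<phi> u"
      using assms(5) ue continuous_on_eq_continuous_at[of "ball 0 e" \<phi>] by auto
    have dphi: "(\<phi> has_real_derivative inverse Gu) (at u)"
      unfolding Gu_def
    proof (rule DERIV_inverse_function[where a="-e" and b=e])
      show "(uF \<kappa> has_real_derivative G (\<kappa> * sin (\<phi> u))) (at (\<phi> u))" by (rule uF_deriv[OF k])
      show "G (\<kappa> * sin (\<phi> u)) \<noteq> 0" using Gpos Gu_def by simp
      show "uF \<kappa> (\<phi> y) = y" if "- e < y" "y < e" for y using assms(7)[of y] that by auto
    qed (use ue cphi in auto)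
    have s2: "(\<kappa> * sin (\<phi> u))\<^sup>2 < 1"
      using ksin_bound[OF k, of "\<phi> u"] by (simp add: abs_square_less_1)
    define D where "D = (- (\<kappa> * (\<kappa> * (2 * sin (\<phi> u) * cos (\<phi> u) * (1 / Gu)))) / (2 * d))"
    have dsq: "((\<lambda>v. sqrt (1 - (\<kappa> * sin (\<phi> v))\<^sup>2)) has_real_derivative D) (at u)"
    proof -
      note h1 = DERIV_cmult[OF DERIV_fun_sin[OF dphi], of \<kappa>]
      note h2 = DERIV_power[OF h1, of 2]
      note h3 = DERIV_diff[OF DERIV_const[of 1] h2]
      have pos: "0 < 1 - (\<kappa> * sin (\<phi> u))\<^sup>2" using s2 by simp
      note h4 = DERIV_chain2[OF DERIV_real_sqrt[OF pos] h3]
      have dpos: "d > 0" unfolding d_def using pos by simp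
      have eq: "inverse (sqrt (1 - (\<kappa> * sin (\<phi> u))\<^sup>2)) / 2 *
          (0 - of_nat 2 * (\<kappa> * (cos (\<phi> u) * inverse Gu) * (\<kappa> * sin (\<phi> u)) ^ (2 - Suc 0))) = D"
        unfolding D_def d_def[symmetric] using dpos Gpos by (simp add: field_simps)
      show ?thesis using h4 unfolding eq .
    qed
    have "((\<lambda>v. cos (\<psi> v)) has_real_derivative D) (at u)"
    proof (rule has_field_derivative_transform_within_open[OF dsq, of "ball 0 e'"])
      show "sqrt (1 - (\<kappa> * sin (\<phi> x))\<^sup>2) = cos (\<psi> x)" if "x \<in> ball 0 e'" for x
        using cos_eq[of x] that by simp
    qed (use u in auto)
    moreover have "D\<^sup>2 = 2 * (1 - cos (\<psi> u)) * ((cos (\<psi> u))\<^sup>2 - lam\<^sup>2)"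
      unfolding D_def cos_eq[OF u] assms(3) d_def
      by (rule alg[OF k refl refl Gu_def[unfolded inverse_eq_divide]])
    ultimately show "\<exists>D. ((\<lambda>v. cos (\<psi> v)) has_real_derivative D) (at u) \<and>
                D\<^sup>2 = 2 * (1 - cos (\<psi> u)) * ((cos (\<psi> u))\<^sup>2 - lam\<^sup>2)" by blast
  qed
qed

end
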